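(* Let $v=v(z)=zM(z)$, where $M(z)=\frac{1-z-\sqrt{1-2z-3z^2}}{2z^2}$ (so $z=\frac{v}{1+v+v^2}$). The total number of leaves over all Retakh plane trees, counted by number of nodes, has generating function $$\sum_{\tau}\mathrm{leaves}(\tau)\,z^{|\tau|}=\frac{v(1+v)(1-v+2v^2-v^3)}{(1-v)(1+v+v^2)},$$ where the sum runs over all Retakh plane trees $\tau$, $|\tau|$ is the number of nodes, and $\mathrm{leaves}(\tau)$ is the number of nodes with no children (the one-node tree has one leaf).
   Context: A Retakh plane tree is a plane (ordered rooted) tree in which every non-root leaf has depth $1$ or even depth (root depth $0$); the one-node tree is included. These correspond to Dyck paths all of whose peaks are at level $1$ or at an even level, non-root leaves corresponding to peaks. *)

theory Defs
  imports Complex_Main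
begin

datatype ptree = Node "ptree list"

fun nodes :: "ptree \<Rightarrow> nat" where
  "nodes (Node ts) = 1 + sum_list (map nodes ts)"

fun leaves :: "ptree \<Rightarrow> nat" where
  "leaves (Node []) = 1"
| "leaves (Node (t # ts)) = sum_list (map leaves (t # ts))"

fun leaf_depths :: "nat \<Rightarrow> ptree \<Rightarrow> nat set" where
  "leaf_depths d (Node []) = {d}"
| "leaf_depths d (Node (t # ts)) = (\<Union>s\<in>set (t # ts). leaf_depths (Suc d) s)"

definition retakh :: "ptree \<Rightarrow> bool" where
  "retakh \<tau> \<longleftrightarrow> (\<forall>d\<in>leaf_depths 0 \<tau>. d \<noteq> 0 \<longrightarrow> d = 1 \<or> even d)"

definition retakh_leaf_total :: "nat \<Rightarrow> nat" where
  "retakh_leaf_total n = (\<Sum>\<tau>\<in>{\<tau>. retakh \<tau> \<and> nodes \<tau> = n}. leaves \<tau>)"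

definition motzkinM :: "real \<Rightarrow> real" where
  "motzkinM z = (1 - z - sqrt (1 - 2*z - 3*z^2)) / (2 * z^2)"

definition vfun :: "real \<Rightarrow> real" where
  "vfun z = z * motzkinM z"

end

theory Submission
  imports Defs
begin


definition nodesf :: "ptree list \<Rightarrow> nat" where "nodesf ts = sum_list (map nodes ts)"
definition leavesf :: "ptree list \<Rightarrow> nat" where "leavesf ts = sum_list (map leaves ts)"

lemma nodes_Node: "nodes (Node ts) = Suc (nodesf ts)" by (simp add: nodesf_def)
lemma nodes_pos: "nodes t \<ge> 1" by (cases t) simp

lemma leaves_Node: "leaves (Node ts) = leavesf ts + (if ts = [] then 1 else 0)"
  by (cases ts) (simp_all add: leavesf_def)

lemma nodesf_Cons[simp]: "nodesf (s#ss) = nodes s + nodesf ss" by (simp add: nodesf_def)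
lemma nodesf_Nil[simp]: "nodesf [] = 0" by (simp add: nodesf_def)
lemma leavesf_Cons[simp]: "leavesf (s#ss) = leaves s + leavesf ss" by (simp add: leavesf_def)
lemma leavesf_Nil[simp]: "leavesf [] = 0" by (simp add: leavesf_def)

lemma length_le_nodesf: "length ts \<le> nodesf ts"
  proof (induction ts)
  case (Cons a ts) then show ?case using nodes_pos[of a] by simp
qed simp

lemma mem_le_nodesf: "s \<in> set ts \<Longrightarrow> nodes s \<le> nodesf ts"
  by (induction ts) auto

lemma leaves_le_nodes: "leaves t \<le> nodes t"
proof (induction t)
  case (Node ts)
  have "leavesf ts \<le> nodesf ts" using Node
    by (induction ts) (auto intro: add_mono)
  then show ?case by (subst leaves_Node, subst nodes_Node) simp
qed

lemma leavesf_le_nodesf: "leavesf ts \<le> nodesf ts"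
  by (induction ts) (auto intro: add_mono leaves_le_nodes)

lemma finite_nodes_le: "finite {t. nodes t \<le> n}"
proof (induction n)
  case 0
  have "{t. nodes t \<le> 0} = {}" using nodes_pos by (metis Collect_empty_eq not_one_le_zero le_trans)
  then show ?case by (metis finite.emptyI)
next
  case (Suc n)
  have "{t. nodes t \<le> Suc n} \<subseteq> Node ` {ts. set ts \<subseteq> {t. nodes t \<le> n} \<and> length ts \<le> n}"
  proof
    fix t assume "t \<in> {t. nodes t \<le> Suc n}"
    then obtain ts where t: "t = Node ts" and le: "nodesf ts \<le> n"
      by (cases t) (auto simp: nodesf_def)
    then show "t \<in> Node ` {ts. set ts \<subseteq> {t. nodes t \<le> n} \<and> length ts \<le> n}"
    proof -
      have "set ts \<subseteq> {t. nodes t \<le> n}" using mem_le_nodesf[of _ ts] le by (auto intro: le_trans)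
      moreover have "length ts \<le> n" using length_le_nodesf[of ts] le by linarith
      ultimately show ?thesis using t by blast
    qed
  qed
  moreover have "finite (Node ` {ts. set ts \<subseteq> {t. nodes t \<le> n} \<and> length ts \<le> n})"
    using finite_lists_length_le[OF Suc.IH] by blast
  ultimately show ?case by (rule finite_subset)
qed

lemma finite_nodesf: "finite {ts. nodesf ts = n}"
proof -
  have "{ts. nodesf ts = n} \<subseteq> {ts. set ts \<subseteq> {t. nodes t \<le> n} \<and> length ts \<le> n}"
  proof
    fix ts assume "ts \<in> {ts. nodesf ts = n}"
    then have "nodesf ts = n" by simp
    then show "ts \<in> {ts. set ts \<subseteq> {t. nodes t \<le> n} \<and> length ts \<le> n}"
      using length_le_nodesf[of ts] mem_le_nodesf[of _ ts] by auto
  qed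
  then show ?thesis using finite_lists_length_le[OF finite_nodes_le] finite_subset by blast
qed

lemma finite_nodes_eq: "finite {t. nodes t = n}"
  using finite_nodes_le[of n] by (rule finite_subset[rotated]) auto

lemma ld_shift: "leaf_depths d t = (\<lambda>x. x + d) ` leaf_depths 0 t"
proof (induction t arbitrary: d)
  case (Node ts)
  show ?case
  proof (cases ts)
    case Nil then show ?thesis by simp
  next
    case (Cons a list)
    have "leaf_depths d (Node ts) = (\<Union>s\<in>set ts. leaf_depths (Suc d) s)" using Cons by simp
    also have "\<dots> = (\<Union>s\<in>set ts. (\<lambda>x. x + Suc d) ` leaf_depths 0 s)"
      by (rule SUP_cong[OF refl], rule Node.IH)
    also have "\<dots> = (\<lambda>x. x + d) ` (\<Union>s\<in>set ts. (\<lambda>x. x + Suc 0) ` leaf_depths 0 s)"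
      by (simp only: image_UN image_image) (simp add: add.commute)
    also have "(\<Union>s\<in>set ts. (\<lambda>x. x + Suc 0) ` leaf_depths 0 s) = (\<Union>s\<in>set ts. leaf_depths (Suc 0) s)"
      by (rule SUP_cong[OF refl], rule Node.IH[symmetric])
    also have "\<dots> = leaf_depths 0 (Node ts)" using Cons by simp
    finally show ?thesis .
  qed
qed

lemma ld_Node: "ts \<noteq> [] \<Longrightarrow> leaf_depths 0 (Node ts) = (\<Union>s\<in>set ts. Suc ` leaf_depths 0 s)"
proof -
  have "\<And>s. leaf_depths (Suc 0) s = Suc ` leaf_depths 0 s" using ld_shift[of 1] by simp
  then show "ts \<noteq> [] \<Longrightarrow> ?thesis" by (cases ts) auto
qed

lemma ld_nonempty: "leaf_depths d t \<noteq> {}"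
proof (induction t arbitrary: d)
  case (Node ts) then show ?case by (cases ts) auto
qed

definition ev :: "ptree \<Rightarrow> bool" where "ev t \<longleftrightarrow> (\<forall>x\<in>leaf_depths 0 t. even x)"
definition od :: "ptree \<Rightarrow> bool" where "od t \<longleftrightarrow> (\<forall>x\<in>leaf_depths 0 t. odd x)"
definition cc :: "ptree \<Rightarrow> bool" where "cc t \<longleftrightarrow> (\<forall>x\<in>leaf_depths 0 t. x = 0 \<or> odd x)"

lemma ev_Node: "ev (Node ts) \<longleftrightarrow> list_all od ts"
  by (cases "ts = []") (auto simp: ev_def od_def ld_Node list_all_iff)

lemma od_Node: "od (Node ts) \<longleftrightarrow> ts \<noteq> [] \<and> list_all ev ts"
  by (cases "ts = []") (auto simp: ev_def od_def ld_Node list_all_iff)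

lemma cc_Node: "cc (Node ts) \<longleftrightarrow> list_all ev ts"
  by (cases "ts = []") (auto simp: ev_def cc_def ld_Node list_all_iff)

lemma retakh_Node: "retakh (Node ts) \<longleftrightarrow> list_all cc ts"
  by (cases "ts = []") (auto simp: retakh_def cc_def ld_Node list_all_iff)



declare nodes.simps[simp del]


definition TS :: "(ptree \<Rightarrow> bool) \<Rightarrow> nat \<Rightarrow> ptree set" where "TS P n = {t. P t \<and> nodes t = n}"
definition FS :: "(ptree \<Rightarrow> bool) \<Rightarrow> nat \<Rightarrow> ptree list set" where "FS Q n = {ts. list_all Q ts \<and> nodesf ts = n}"

definition tsum :: "(ptree \<Rightarrow> bool) \<Rightarrow> (ptree \<Rightarrow> nat) \<Rightarrow> nat \<Rightarrow> real" where
  "tsum P w n = (\<Sum>t\<in>TS P n. real (w t))"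
definition fsum :: "(ptree \<Rightarrow> bool) \<Rightarrow> (ptree list \<Rightarrow> nat) \<Rightarrow> nat \<Rightarrow> real" where
  "fsum Q g n = (\<Sum>ts\<in>FS Q n. real (g ts))"

lemma finite_TS[simp]: "finite (TS P n)"
  unfolding TS_def by (rule finite_subset[OF _ finite_nodes_eq[of n]]) auto
lemma finite_FS[simp]: "finite (FS Q n)"
  unfolding FS_def by (rule finite_subset[OF _ finite_nodesf[of n]]) auto

lemma tsum_0[simp]: "tsum P w 0 = 0"
proof -
  have "nodes t \<noteq> 0" for t using nodes_pos[of t] by linarith
  then have "TS P 0 = {}" by (auto simp: TS_def)
  then show ?thesis by (simp add: tsum_def mult.commute)
qed

lemma tsum_Suc: "tsum P w (Suc n) = (\<Sum>ts\<in>{ts. P (Node ts) \<and> nodesf ts = n}. real (w (Node ts)))"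
proof -
  have "TS P (Suc n) = Node ` {ts. P (Node ts) \<and> nodesf ts = n}"
    unfolding TS_def
  proof (intro equalityI subsetI)
    fix t assume "t \<in> {t. P t \<and> nodes t = Suc n}"
    then show "t \<in> Node ` {ts. P (Node ts) \<and> nodesf ts = n}"
      by (cases t) (auto simp: nodes_Node)
  qed (auto simp: nodes_Node)
  moreover have "inj Node" by (auto intro: injI)
  ultimately show ?thesis unfolding tsum_def
    by (simp add: sum.reindex inj_on_def)
qed

lemma fsum_dec:
  fixes f :: "ptree list \<Rightarrow> real"
  shows "(\<Sum>ts\<in>FS Q n. f ts) = (if n = 0 then f [] else 0)
     + (\<Sum>k\<le>n. \<Sum>s\<in>TS Q k. \<Sum>ss\<in>FS Q (n-k). f (s#ss))"
proof -
  define A where "A = (\<Union>k\<in>{..n}. TS Q k \<times> FS Q (n-k))"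
  have split: "FS Q n = (if n = 0 then {[]} else {}) \<union> (\<lambda>(s,ss). s#ss) ` A"
  proof (intro equalityI subsetI)
    fix ts assume ts: "ts \<in> FS Q n"
    show "ts \<in> (if n = 0 then {[]} else {}) \<union> (\<lambda>(s,ss). s#ss) ` A"
    proof (cases ts)
      case Nil then show ?thesis using ts by (auto simp: FS_def)
    next
      case (Cons s ss)
      then have "(s,ss) \<in> TS Q (nodes s) \<times> FS Q (n - nodes s)" "nodes s \<le> n"
        using ts by (auto simp: FS_def TS_def)
      then have "(s,ss) \<in> A" unfolding A_def by blast
      then show ?thesis using Cons by force
    qed
  next
    fix ts assume "ts \<in> (if n = 0 then {[]} else {}) \<union> (\<lambda>(s,ss). s#ss) ` A"
    then show "ts \<in> FS Q n"
      by (auto simp: A_def FS_def TS_def split: if_splits)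
  qed
  have disj: "(if n = 0 then {[]} else {}) \<inter> (\<lambda>(s,ss). s#ss) ` A = {}" by auto
  have finA: "finite A" unfolding A_def by auto
  have inj: "inj_on (\<lambda>(s,ss). s#ss) A" by (auto simp: inj_on_def)
  have "(\<Sum>ts\<in>FS Q n. f ts) = (\<Sum>ts\<in>(if n = 0 then {[]} else {}). f ts) + (\<Sum>ts\<in>(\<lambda>(s,ss). s#ss) ` A. f ts)"
    unfolding split by (rule sum.union_disjoint) (use finA disj in auto)
  also have "(\<Sum>ts\<in>(\<lambda>(s,ss). s#ss) ` A. f ts) = (\<Sum>p\<in>A. f (fst p # snd p))"
    by (subst sum.reindex[OF inj]) (simp add: case_prod_beta)
  also have "\<dots> = (\<Sum>k\<le>n. \<Sum>p\<in>TS Q k \<times> FS Q (n-k). f (fst p # snd p))"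
    unfolding A_def
  proof (rule sum.UNION_disjoint)
    show "\<forall>i\<in>{..n}. \<forall>j\<in>{..n}. i \<noteq> j \<longrightarrow> (TS Q i \<times> FS Q (n - i)) \<inter> (TS Q j \<times> FS Q (n - j)) = {}"
      by (auto simp: TS_def)
  qed auto
  also have "\<dots> = (\<Sum>k\<le>n. \<Sum>s\<in>TS Q k. \<Sum>ss\<in>FS Q (n-k). f (s#ss))"
    by (simp add: sum.cartesian_product case_prod_beta)
  finally show ?thesis by simp
qed

definition w1 :: "ptree \<Rightarrow> nat" where [simp]: "w1 t = 1"
definition wf1 :: "ptree list \<Rightarrow> nat" where [simp]: "wf1 t = 1"
abbreviation "cT P \<equiv> tsum P w1"
abbreviation "lT P \<equiv> tsum P leaves"
abbreviation "cF Q \<equiv> fsum Q wf1"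
abbreviation "lF Q \<equiv> fsum Q leavesf"

lemma cF_rec: "cF Q n = (if n = 0 then 1 else 0) + (\<Sum>k\<le>n. cT Q k * cF Q (n-k))"
  unfolding fsum_def by (subst fsum_dec) (simp add: tsum_def)

lemma lF_rec: "lF Q n = (\<Sum>k\<le>n. lT Q k * cF Q (n-k) + cT Q k * lF Q (n-k))"
  unfolding fsum_def by (subst fsum_dec) (simp add: tsum_def sum.distrib sum_distrib_left sum_distrib_right ac_simps)

lemma Nil_FS: "[] \<in> FS Q n \<longleftrightarrow> n = 0" by (auto simp: FS_def)

lemma sum_leaves_Node: "(\<Sum>ts\<in>FS Q n. real (leaves (Node ts))) = lF Q n + (if n = 0 then 1 else 0)"
proof -
  have "(\<Sum>ts\<in>FS Q n. real (leaves (Node ts))) = (\<Sum>ts\<in>FS Q n. real (leavesf ts) + (if ts = [] then 1 else 0))"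
    by (rule sum.cong) (auto simp: leaves_Node)
  also have "\<dots> = lF Q n + (\<Sum>ts\<in>FS Q n. (if ts = [] then 1 else 0))"
    by (simp add: sum.distrib fsum_def)
  also have "(\<Sum>ts\<in>FS Q n. (if ts = [] then 1 else 0)) = (if n = 0 then 1 else (0::real))"
    by (simp add: sum.delta' Nil_FS)
  finally show ?thesis .
qed

lemma set_ev: "{ts. ev (Node ts) \<and> nodesf ts = n} = FS od n" by (auto simp: FS_def ev_Node)
lemma set_cc: "{ts. cc (Node ts) \<and> nodesf ts = n} = FS ev n" by (auto simp: FS_def cc_Node)
lemma set_retakh: "{ts. retakh (Node ts) \<and> nodesf ts = n} = FS cc n" by (auto simp: FS_def retakh_Node)
lemma set_od: "{ts. od (Node ts) \<and> nodesf ts = n} = FS ev n - {[]}" by (auto simp: FS_def od_Node)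


lemma cE_Suc: "cT ev (Suc n) = cF od n" by (simp add: tsum_Suc set_ev fsum_def)
lemma lE_Suc: "lT ev (Suc n) = lF od n + (if n = 0 then 1 else 0)" by (simp add: tsum_Suc set_ev sum_leaves_Node)
lemma cC_Suc: "cT cc (Suc n) = cF ev n" by (simp add: tsum_Suc set_cc fsum_def)
lemma lC_Suc: "lT cc (Suc n) = lF ev n + (if n = 0 then 1 else 0)" by (simp add: tsum_Suc set_cc sum_leaves_Node)
lemma cR_Suc: "cT retakh (Suc n) = cF cc n" by (simp add: tsum_Suc set_retakh fsum_def)
lemma lR_Suc: "lT retakh (Suc n) = lF cc n + (if n = 0 then 1 else 0)" by (simp add: tsum_Suc set_retakh sum_leaves_Node)
lemma card_FS0: "card (FS Q 0) \<ge> 1"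
  using Nil_FS[of Q 0] card_gt_0_iff[of "FS Q 0"] by auto

lemma cO_Suc: "cT od (Suc n) = cF ev n - (if n = 0 then 1 else 0)"
  using card_FS0[of ev] by (simp add: tsum_Suc set_od fsum_def sum_diff1 Nil_FS of_nat_diff)
lemma lO_Suc: "lT od (Suc n) = lF ev n"
  by (simp add: tsum_Suc set_od fsum_def sum_diff1 Nil_FS leaves_Node)

lemma tsum_nonneg: "tsum P w n \<ge> 0" by (simp add: tsum_def sum_nonneg)
lemma fsum_nonneg: "fsum Q g n \<ge> 0" by (simp add: fsum_def sum_nonneg)

lemma lT_le: "lT P n \<le> real n * cT P n"
proof -
  have "(\<Sum>t\<in>TS P n. real (leaves t)) \<le> (\<Sum>t\<in>TS P n. real n)"
    by (rule sum_mono) (use leaves_le_nodes in \<open>auto simp: TS_def\<close>)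
  then show ?thesis by (simp add: tsum_def mult.commute)
qed
lemma lF_le: "lF Q n \<le> real n * cF Q n"
proof -
  have "(\<Sum>t\<in>FS Q n. real (leavesf t)) \<le> (\<Sum>t\<in>FS Q n. real n)"
    by (rule sum_mono) (use leavesf_le_nodesf in \<open>auto simp: FS_def\<close>)
  then show ?thesis by (simp add: fsum_def mult.commute)
qed

lemma total_eq: "real (retakh_leaf_total n) = lT retakh n"
  by (simp add: retakh_leaf_total_def tsum_def TS_def)



definition PS :: "(nat \<Rightarrow> real) \<Rightarrow> real \<Rightarrow> nat \<Rightarrow> real" where
  "PS a t N = (\<Sum>n<N. a n * t^n)"
definition conv :: "(nat \<Rightarrow> real) \<Rightarrow> (nat \<Rightarrow> real) \<Rightarrow> nat \<Rightarrow> real" where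
  "conv a b n = (\<Sum>k\<le>n. a k * b (n-k))"
definition dl :: "nat \<Rightarrow> real" where "dl n = (if n = 0 then 1 else 0)"

lemma PS_shift: "a 0 = 0 \<Longrightarrow> PS a t (Suc N) = t * PS (\<lambda>n. a (Suc n)) t N"
  unfolding PS_def by (subst sum.lessThan_Suc_shift) (simp add: sum_distrib_left ac_simps)

lemma PS_dl: "PS dl t N = (if N = 0 then 0 else 1)"
  by (induction N) (auto simp: PS_def dl_def)

lemma PS_0[simp]: "PS a t 0 = 0" by (simp add: PS_def)

lemma PS_nonneg: "(\<And>n. a n \<ge> 0) \<Longrightarrow> t \<ge> 0 \<Longrightarrow> PS a t N \<ge> 0"
  unfolding PS_def by (intro sum_nonneg mult_nonneg_nonneg) auto

lemma PS_add: "PS (\<lambda>n. a n + b n) t N = PS a t N + PS b t N"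
  unfolding PS_def by (simp add: distrib_right sum.distrib)
lemma PS_diff: "PS (\<lambda>n. a n - b n) t N = PS a t N - PS b t N"
  unfolding PS_def by (simp add: left_diff_distrib sum_subtractf)

lemma PS_rec:
  assumes "\<And>n. f n = dl n + conv a f n"
  shows "PS f t M = PS dl t M + PS (conv a f) t M"
proof -
  have "f = (\<lambda>n. dl n + conv a f n)" by (rule ext) (rule assms)
  then have "PS f t M = PS (\<lambda>n. dl n + conv a f n) t M" by (rule arg_cong[where f="\<lambda>h. PS h t M"])
  then show ?thesis by (simp add: PS_add)
qed

lemma PS_conv:
  assumes a0: "a 0 = 0" and an: "\<And>n. a n \<ge> 0" and bn: "\<And>n. b n \<ge> 0" and t: "t \<ge> 0"
  shows "PS (conv a b) t (Suc N) \<le> PS a t (Suc N) * PS b t N"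
proof -
  define F where "F = (\<lambda>(i::nat,j::nat). a i * t^i * (b j * t^j))"
  define T where "T = {(i::nat,j::nat). i+j < Suc N}"
  define S where "S = {..<Suc N} \<times> {..<N}"
  have finT: "finite T" unfolding T_def
    by (rule finite_subset[of _ "{..<Suc N} \<times> {..<Suc N}"]) auto
  have finS: "finite S" unfolding S_def by auto
  have Fnn: "F p \<ge> 0" for p unfolding F_def using an bn t by (auto split: prod.splits)
  have "PS (conv a b) t (Suc N) = (\<Sum>k<Suc N. \<Sum>i\<le>k. a i * t^i * (b (k-i) * t^(k-i)))"
    unfolding PS_def conv_def sum_distrib_right
    by (intro sum.cong refl) (simp add: power_add[symmetric] ac_simps)
  also have "\<dots> = sum F T"
    unfolding F_def T_def by (rule sum.triangle_reindex[symmetric])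
  also have "\<dots> \<le> sum F (T \<union> S)"
    by (rule sum_mono2) (use finT finS Fnn in auto)
  also have "\<dots> = sum F S"
  proof (rule sum.mono_neutral_left[symmetric])
    show "\<forall>i\<in>T \<union> S - S. F i = 0"
    proof
      fix p assume p: "p \<in> T \<union> S - S"
      obtain i j where ij: "p = (i,j)" by force
      then have "i = 0" using p by (auto simp: T_def S_def)
      then show "F p = 0" using ij a0 by (simp add: F_def)
    qed
  qed (use finT finS in auto)
  also have "\<dots> = PS a t (Suc N) * PS b t N"
    unfolding S_def F_def PS_def by (simp only: sum_product sum.cartesian_product)
  finally show ?thesis .
qed

lemma boundA:
  assumes nn: "\<And>n. e n \<ge> 0" "\<And>n. oo n \<ge> 0" "\<And>n. fo n \<ge> 0" "\<And>n. fe n \<ge> 0"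
  and e0: "e 0 = 0" and eS: "\<And>n. e (Suc n) = fo n"
  and o0: "oo 0 = 0" and oS: "\<And>n. oo (Suc n) = fe n - dl n"
  and fo: "\<And>n. fo n = dl n + conv oo fo n"
  and fe: "\<And>n. fe n = dl n + conv e fe n"
  and t: "t \<ge> 0"
  and Es: "Es = t * FOs" and Os: "Os = t * (FEs - 1)" and FOs: "FOs = 1 + Os * FOs"
  and FEs: "FEs = 1 + Es * FEs" and pos: "Os \<ge> 0" "Es \<ge> 0" "FOs \<ge> 0" "FEs \<ge> 1"
  shows "PS e t N \<le> Es \<and> PS oo t N \<le> Os \<and> PS fo t N \<le> FOs \<and> PS fe t N \<le> FEs"
proof (induction N)
  case 0
  then show ?case using pos by (simp add: PS_def)
next
  case (Suc N)
  then have IH: "PS e t N \<le> Es" "PS oo t N \<le> Os" "PS fo t N \<le> FOs" "PS fe t N \<le> FEs" by auto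
  have 1: "PS e t (Suc N) \<le> Es"
    using PS_shift[of e t N, OF e0] eS IH(3) t Es by (simp add: mult_left_mono)
  have 2: "PS oo t (Suc N) \<le> Os"
  proof -
    have "PS oo t (Suc N) = t * (PS fe t N - PS dl t N)"
      using PS_shift[of oo t N, OF o0] oS by (simp add: PS_diff)
    also have "\<dots> \<le> t * (FEs - 1)"
      using IH(4) pos t by (intro mult_left_mono) (cases N, auto simp: PS_dl)
    finally show ?thesis using Os by simp
  qed
  have 3: "PS fo t (Suc N) \<le> FOs"
  proof -
    have "PS fo t (Suc N) = PS dl t (Suc N) + PS (conv oo fo) t (Suc N)"
      using fo by (rule PS_rec)
    also have "\<dots> \<le> 1 + PS oo t (Suc N) * PS fo t N"
      using PS_conv[of oo fo t N] o0 nn t by (simp add: PS_dl)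
    also have "\<dots> \<le> 1 + Os * FOs"
      using 2 IH(3) PS_nonneg[of oo t] PS_nonneg[of fo t] nn t pos
      by (intro add_left_mono mult_mono) auto
    finally show ?thesis using FOs by simp
  qed
  have 4: "PS fe t (Suc N) \<le> FEs"
  proof -
    have "PS fe t (Suc N) = PS dl t (Suc N) + PS (conv e fe) t (Suc N)"
      using fe by (rule PS_rec)
    also have "\<dots> \<le> 1 + PS e t (Suc N) * PS fe t N"
      using PS_conv[of e fe t N] e0 nn t by (simp add: PS_dl)
    also have "\<dots> \<le> 1 + Es * FEs"
      using 1 IH(4) PS_nonneg[of e t] PS_nonneg[of fe t] nn t pos
      by (intro add_left_mono mult_mono) auto
    finally show ?thesis using FEs by simp
  qed
  show ?case using 1 2 3 4 by simp
qed

lemma boundC: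
  assumes nn: "\<And>n. c n \<ge> 0" "\<And>n. fc n \<ge> 0"
  and c0: "c 0 = 0" and cS: "\<And>n. c (Suc n) = fe n"
  and fc: "\<And>n. fc n = dl n + conv c fc n"
  and t: "t \<ge> 0" and feb: "\<And>N. PS fe t N \<le> FEs"
  and Cs: "Cs = t * FEs" and FCs: "FCs = 1 + Cs * FCs" and pos: "Cs \<ge> 0" "FCs \<ge> 0"
  shows "PS c t N \<le> Cs \<and> PS fc t N \<le> FCs"
proof (induction N)
  case 0
  then show ?case using pos by (simp add: PS_def)
next
  case (Suc N)
  have 1: "PS c t (Suc N) \<le> Cs"
    using PS_shift[of c t N, OF c0] cS feb[of N] t Cs by (simp add: mult_left_mono)
  have "PS fc t (Suc N) = PS dl t (Suc N) + PS (conv c fc) t (Suc N)"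
    using fc by (rule PS_rec)
  also have "\<dots> \<le> 1 + PS c t (Suc N) * PS fc t N"
    using PS_conv[of c fc t N] c0 nn t by (simp add: PS_dl)
  also have "\<dots> \<le> 1 + Cs * FCs"
    using 1 Suc PS_nonneg[of c t] PS_nonneg[of fc t] nn t pos
    by (intro add_left_mono mult_mono) auto
  finally show ?case using FCs 1 by simp
qed

lemma summable_PS:
  assumes "\<And>n. a n \<ge> 0" "t \<ge> 0" "\<And>N. PS a t N \<le> B"
  shows "summable (\<lambda>n. a n * t^n)" "(\<Sum>n. a n * t^n) \<le> B"
proof -
  show s: "summable (\<lambda>n. a n * t^n)"
    by (rule summableI_nonneg_bounded[where x=B]) (use assms in \<open>auto simp: PS_def\<close>)
  show "(\<Sum>n. a n * t^n) \<le> B"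
    by (rule suminf_le_const[OF s]) (use assms in \<open>auto simp: PS_def\<close>)
qed

lemma summable_n:
  assumes nn: "\<And>n. a n \<ge> 0" and la: "\<And>n. 0 \<le> l n" "\<And>n. l n \<le> real n * a n"
  and s: "summable (\<lambda>n. a n * t'^n)" and t: "0 \<le> t" "t < t'"
  shows "summable (\<lambda>n. l n * t^n)"
proof -
  have t'0: "t' > 0" using t by linarith
  define q where "q = t / t'"
  have q: "norm q < 1" "q \<ge> 0" using t t'0 by (auto simp: q_def)
  have "(\<lambda>n. of_nat n * q ^ n) \<longlonglongrightarrow> 0" by (rule powser_times_n_limit_0[OF q(1)])
  then have "Bseq (\<lambda>n. of_nat n * q ^ n)" using convergent_imp_Bseq convergentI by blast
  then obtain K where K: "K > 0" "\<And>n. norm (real n * q^n) \<le> K" by (auto simp: Bseq_def)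
  show ?thesis
  proof (rule summable_comparison_test[where g="\<lambda>n. K * (a n * t'^n)"])
    show "summable (\<lambda>n. K * (a n * t'^n))" using s by (rule summable_mult)
    show "\<exists>N. \<forall>n\<ge>N. norm (l n * t^n) \<le> K * (a n * t'^n)"
    proof (intro exI allI impI)
      fix n :: nat
      have tn: "t^n = q^n * t'^n" using t'0 by (simp add: q_def power_divide)
      have "norm (l n * t^n) = l n * t^n" using la t by simp
      also have "\<dots> \<le> real n * a n * t^n" using la t by (intro mult_right_mono) auto
      also have "\<dots> = (real n * q^n) * (a n * t'^n)" by (simp add: tn ac_simps)
      also have "\<dots> \<le> K * (a n * t'^n)"
        using K(2)[of n] q nn t'0 by (intro mult_right_mono) auto
      finally show "norm (l n * t^n) \<le> K * (a n * t'^n)" .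
    qed
  qed
qed



lemma vfun_props:
  fixes z :: real
  assumes z: "0 < \<bar>z\<bar>" "\<bar>z\<bar> < 1/3"
  shows "vfun z = z * (1 + vfun z + (vfun z)^2)" "\<bar>vfun z\<bar> < 1" "z > 0 \<Longrightarrow> vfun z > 0"
proof -
  define s where "s = sqrt (1 - 2*z - 3*z^2)"
  have rad: "1 - 2*z - 3*z^2 \<ge> 0"
  proof -
    have e: "1 - 2*z - 3*z^2 = (1 - 3*z) * (1 + z)" by (simp add: algebra_simps power2_eq_square)
    have "(1 - 3*z) * (1 + z) \<ge> 0" using z by (intro mult_nonneg_nonneg) (auto simp: abs_if split: if_splits)
    then show ?thesis using e by linarith
  qed
  have s2: "s^2 = 1 - 2*z - 3*z^2" using rad by (simp add: s_def)
  have s0: "s \<ge> 0" using rad by (simp add: s_def)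
  define D where "D = 1 - z + s"
  have zl: "2 * \<bar>z\<bar> < 1 - z" using z by (auto simp: abs_if split: if_splits)
  have Dpos: "D > 0" using zl s0 by (simp add: D_def)
  have z0: "z \<noteq> 0" using z by auto
  have v: "vfun z = (1 - z - s) / (2*z)"
    using z0 by (simp add: vfun_def motzkinM_def s_def power2_eq_square field_simps)
  have "(1 - z - s) * D = 4 * z^2"
    unfolding D_def using s2 by (simp add: algebra_simps power2_eq_square)
  then have vD: "vfun z * D = 2 * z"
    unfolding v using z0 by (simp add: field_simps power2_eq_square)
  have quad: "D^2 + (2*z - 2) * D + 4 * z^2 = 0"
    unfolding D_def using s2 by (simp add: algebra_simps power2_eq_square)
  have "D^2 * (vfun z - z * (1 + vfun z + (vfun z)^2)) = 0"
  proof -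
    have "D^2 * (vfun z - z * (1 + vfun z + (vfun z)^2)) =
          (vfun z * D) * D - z * D^2 - z * (vfun z * D) * D - z * (vfun z * D)^2"
      by (simp add: algebra_simps power2_eq_square)
    also have "\<dots> = z * (2 * D - D^2 - 2 * z * D - 4 * z^2)"
      unfolding vD by (simp add: algebra_simps power2_eq_square)
    also have "\<dots> = 0" using quad by (simp add: algebra_simps power2_eq_square)
    finally show ?thesis .
  qed
  then show "vfun z = z * (1 + vfun z + (vfun z)^2)" using Dpos by simp
  have "\<bar>vfun z * D\<bar> = \<bar>2*z\<bar>" using vD by simp
  then have avD: "\<bar>vfun z\<bar> * D = 2 * \<bar>z\<bar>" using Dpos by (simp add: abs_mult)
  have "\<bar>vfun z\<bar> * D < 1 * D" unfolding avD using zl s0 by (simp add: D_def)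
  then show "\<bar>vfun z\<bar> < 1" using Dpos by simp
  show "z > 0 \<Longrightarrow> vfun z > 0"
  proof -
    assume "z > 0"
    then have "0 < vfun z * D" using vD by simp
    then show ?thesis using Dpos by (simp add: zero_less_mult_iff)
  qed
qed

lemma dl_sums: "(\<lambda>n. dl n * z^n) sums (1::real)"
proof -
  have "(\<lambda>n. dl n * z^n) = (\<lambda>n. if n = 0 then 1 else 0)" by (auto simp: dl_def)
  then show ?thesis using sums_single[of 0 "\<lambda>_. 1::real"] by simp
qed

lemma shift_sums:
  fixes z :: real
  assumes "a 0 = 0" "(\<lambda>n. a (Suc n) * z^n) sums B"
  shows "(\<lambda>n. a n * z^n) sums (z * B)"
proof -
  have "(\<lambda>n. z * (a (Suc n) * z^n)) sums (z * B)" using assms(2) by (rule sums_mult)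
  then have "(\<lambda>n. (\<lambda>n. a n * z^n) (Suc n)) sums (z * B)" by (simp add: ac_simps)
  from sums_Suc_iff[THEN iffD1, OF this] show ?thesis using assms(1) by simp
qed

lemma abs_summ: "(\<And>n. a n \<ge> 0) \<Longrightarrow> summable (\<lambda>n. a n * \<bar>z\<bar>^n) \<Longrightarrow> summable (\<lambda>n. norm (a n * (z::real)^n))"
  by (simp add: abs_mult power_abs)

lemma sums_self: "(\<And>n. a n \<ge> 0) \<Longrightarrow> summable (\<lambda>n. a n * \<bar>z\<bar>^n) \<Longrightarrow> (\<lambda>n. a n * (z::real)^n) sums (\<Sum>n. a n * z^n)"
  by (rule summable_sums, rule summable_norm_cancel, rule abs_summ)

lemma conv_sums:
  fixes z :: real
  assumes "\<And>n. a n \<ge> 0" "\<And>n. b n \<ge> 0" "summable (\<lambda>n. a n * \<bar>z\<bar>^n)" "summable (\<lambda>n. b n * \<bar>z\<bar>^n)"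
  shows "(\<lambda>n. conv a b n * z^n) sums ((\<Sum>n. a n * z^n) * (\<Sum>n. b n * z^n))"
proof -
  have "(\<lambda>k. \<Sum>i\<le>k. (a i * z^i) * (b (k - i) * z^(k-i))) sums ((\<Sum>n. a n * z^n) * (\<Sum>n. b n * z^n))"
    by (rule Cauchy_product_sums) (use abs_summ assms in auto)
  moreover have "(\<lambda>k. \<Sum>i\<le>k. (a i * z^i) * (b (k - i) * z^(k-i))) = (\<lambda>n. conv a b n * z^n)"
    unfolding conv_def sum_distrib_right
    by (intro ext sum.cong refl) (simp add: power_add[symmetric] ac_simps)
  ultimately show ?thesis by simp
qed

lemma final_alg:
  fixes z v LE LFE FC LR :: real
  assumes v: "v = z * (1 + v + v^2)" and va: "\<bar>v\<bar> < 1"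
  and LE: "LE * (1 - v^2) = z" and LFE: "LFE = LE * (1+v)^2"
  and FC: "FC * (1 - z * (1 + v)) = 1" and LR: "LR = z * (z * (LFE + 1) * FC^2 + 1)"
  shows "LR = v * (1 + v) * (1 - v + 2 * v^2 - v^3) / ((1 - v) * (1 + v + v^2))"
proof -
  have "1 + v + v^2 = (v + 1/2)^2 + 3/4" by (simp add: power2_eq_square algebra_simps)
  then have q: "1 + v + v^2 > 0" by (metis add_pos_nonneg zero_le_power2 zero_less_divide_iff zero_less_numeral add.commute)
  have zq: "z * (1 + v + v^2) = v" by (rule sym[OF v])
  have zv: "z = v / (1 + v + v^2)" using zq q by (simp add: eq_divide_eq)
  have a1: "1 - v > 0" "1 + v > 0" using va by auto
  have h: "1 - z * (1 + v) = 1 / (1 + v + v^2)" using q unfolding zv by (simp add: field_simps power2_eq_square)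
  have "FC / (1 + v + v^2) = 1" using FC unfolding h by simp
  then have FC': "FC = 1 + v + v^2" using q by (simp add: divide_eq_eq)
  have f: "(1 - v) * (1 + v) = 1 - v^2" by (simp add: algebra_simps power2_eq_square)
  have "LE * ((1 - v) * (1 + v)) = z" unfolding f by (rule LE)
  then have LE': "LE = z / ((1 - v) * (1 + v))" using a1 by (simp add: eq_divide_eq)
  have n1: "1 - v \<noteq> 0" "1 + v \<noteq> 0" using a1 by auto
  have LFE': "LFE = z * (1 + v) / (1 - v)" using n1 unfolding LFE LE' by (simp add: power2_eq_square)
  have "(1 - v) * (1 + v + v^2) \<noteq> 0" using n1 q by simp
  moreover have "(1 - v) * (1 + v + v^2) = 1 - v * (v * v)" by (simp add: algebra_simps power2_eq_square)
  ultimately have n3: "1 - v * (v * v) \<noteq> 0" by simp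
  have zFC: "z * FC = v" unfolding FC' by (rule zq)
  have "LR = (z * FC)^2 * (LFE + 1) + z" unfolding LR by (simp add: algebra_simps power2_eq_square)
  also have "\<dots> = v^2 * (z * (1 + v) / (1 - v) + 1) + z" unfolding zFC LFE' ..
  also have "\<dots> = (v^2 * (v*(1+v) + (1-v)*(1+v+v^2)) + v*(1-v)) / ((1-v)*(1+v+v^2))"
  proof -
    have D: "(1-v)*(1+v+v^2) \<noteq> 0" using n1 q by simp
    have "(v^2 * (z * (1 + v) / (1 - v) + 1) + z) * ((1-v)*(1+v+v^2))
        = v^2 * ((z*(1+v+v^2))*(1+v) + (1-v)*(1+v+v^2)) + (z*(1+v+v^2))*(1-v)"
      using n1 by (simp add: field_simps)
    also have "\<dots> = v^2 * (v*(1+v) + (1-v)*(1+v+v^2)) + v*(1-v)" unfolding zq ..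
    finally show ?thesis using D by (simp add: eq_divide_eq)
  qed
  also have "\<dots> = v * (1 + v) * (1 - v + 2 * v^2 - v^3) / ((1 - v) * (1 + v + v^2))"
    by (rule arg_cong[where f="\<lambda>x. x / ((1-v)*(1+v+v^2))"]) (simp add: algebra_simps power2_eq_square power3_eq_cube)
  finally show ?thesis .
qed



lemma rec_facts:
  "cT P 0 = 0" "lT P 0 = 0"
  "cT ev (Suc n) = cF od n" "cT od (Suc n) = cF ev n - dl n" "cT cc (Suc n) = cF ev n"
  "lT ev (Suc n) = lF od n + dl n" "lT od (Suc n) = lF ev n" "lT cc (Suc n) = lF ev n + dl n"
  "lT retakh (Suc n) = lF cc n + dl n"
  "cF Q n = dl n + conv (cT Q) (cF Q) n"
  "lF Q n = conv (lT Q) (cF Q) n + conv (cT Q) (lF Q) n"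
  apply simp
  apply simp
  apply (fact cE_Suc)
  using cO_Suc[of n] apply (simp add: dl_def)
  apply (fact cC_Suc)
  using lE_Suc[of n] apply (simp add: dl_def)
  apply (fact lO_Suc)
  using lC_Suc[of n] apply (simp add: dl_def)
  using lR_Suc[of n] apply (simp add: dl_def)
  using cF_rec[of Q n] apply (simp add: dl_def conv_def)
  using lF_rec[of Q n] apply (simp add: conv_def sum.distrib)
  done

lemma counts_summable:
  fixes t :: real
  assumes t: "0 < t" "t < 1/3"
  shows "summable (\<lambda>n. cT ev n * t^n)" "summable (\<lambda>n. cT od n * t^n)"
        "summable (\<lambda>n. cF od n * t^n)" "summable (\<lambda>n. cF ev n * t^n)"
        "summable (\<lambda>n. cT cc n * t^n)" "summable (\<lambda>n. cF cc n * t^n)"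
        "(\<Sum>n. cT ev n * t^n) \<le> vfun t / (1 + vfun t)"
proof -
  define v where "v = vfun t"
  have tz: "0 < \<bar>t\<bar>" "\<bar>t\<bar> < 1/3" using t by auto
  have vq: "v = t * (1 + v + v^2)" "\<bar>v\<bar> < 1" "v > 0"
    using vfun_props[OF tz] t unfolding v_def by auto
  have v1: "v < 1" using vq by auto
  have tv: "t * v < 1/3" using mult_strict_mono[of t "1/3" v 1] t v1 vq(3) by auto
  have tv2: "t * (1 + v) < 2/3" using mult_strict_mono[of t "1/3" "1+v" 2] t v1 vq(3) by auto
  define Es where "Es = v / (1 + v)"
  define Os where "Os = t * v"
  define FOs where "FOs = 1 / (1 - t * v)"
  define FEs where "FEs = 1 + v"
  define Cs where "Cs = t * (1 + v)"
  define FCs where "FCs = 1 / (1 - t * (1 + v))"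
  have n1: "1 - t * v \<noteq> 0" "1 + v \<noteq> 0" "1 - t * (1 + v) \<noteq> 0" using tv tv2 vq by auto
  have Es: "Es = t * FOs"
  proof -
    have "v * (1 - t * v) = t * (1 + v)" using vq(1) by (simp add: algebra_simps power2_eq_square)
    then show ?thesis unfolding Es_def FOs_def using n1 by (simp add: field_simps)
  qed
  have Os: "Os = t * (FEs - 1)" by (simp add: Os_def FEs_def)
  have FOs: "FOs = 1 + Os * FOs" unfolding FOs_def Os_def using n1 by (simp add: field_simps)
  have FEs: "FEs = 1 + Es * FEs" unfolding FEs_def Es_def using n1 by (simp add: field_simps)
  have Cs: "Cs = t * FEs" by (simp add: Cs_def FEs_def)
  have FCs: "FCs = 1 + Cs * FCs" unfolding FCs_def Cs_def using n1 by (simp add: field_simps)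
  have pos: "Os \<ge> 0" "Es \<ge> 0" "FOs \<ge> 0" "FEs \<ge> 1" "Cs \<ge> 0" "FCs \<ge> 0"
    using t vq tv tv2 by (auto simp: Os_def Es_def FOs_def FEs_def Cs_def FCs_def)
  note nn = tsum_nonneg fsum_nonneg
  have A: "PS (cT ev) t N \<le> Es \<and> PS (cT od) t N \<le> Os \<and> PS (cF od) t N \<le> FOs \<and> PS (cF ev) t N \<le> FEs" for N
    by (rule boundA[where e="cT ev" and oo="cT od" and fo="cF od" and fe="cF ev",
          OF _ _ _ _ _ _ _ _ _ _ _ Es Os FOs FEs pos(1) pos(2) pos(3) pos(4)])
       (use t in \<open>simp_all add: rec_facts(1-9) rec_facts(10)[symmetric] tsum_nonneg fsum_nonneg\<close>)
  have C: "PS (cT cc) t N \<le> Cs \<and> PS (cF cc) t N \<le> FCs" for N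
    by (rule boundC[where c="cT cc" and fc="cF cc" and fe="cF ev", OF _ _ _ _ _ _ _ Cs FCs pos(5) pos(6)])
       (use t A in \<open>simp_all add: rec_facts(1-9) rec_facts(10)[symmetric] tsum_nonneg fsum_nonneg\<close>)
  show "summable (\<lambda>n. cT ev n * t^n)" using A t by (intro summable_PS(1)[where B=Es]) (auto simp: tsum_nonneg fsum_nonneg)
  show "summable (\<lambda>n. cT od n * t^n)" using A t by (intro summable_PS(1)[where B=Os]) (auto simp: tsum_nonneg fsum_nonneg)
  show "summable (\<lambda>n. cF od n * t^n)" using A t by (intro summable_PS(1)[where B=FOs]) (auto simp: tsum_nonneg fsum_nonneg)
  show "summable (\<lambda>n. cF ev n * t^n)" using A t by (intro summable_PS(1)[where B=FEs]) (auto simp: tsum_nonneg fsum_nonneg)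
  show "summable (\<lambda>n. cT cc n * t^n)" using C t by (intro summable_PS(1)[where B=Cs]) (auto simp: tsum_nonneg fsum_nonneg)
  show "summable (\<lambda>n. cF cc n * t^n)" using C t by (intro summable_PS(1)[where B=FCs]) (auto simp: tsum_nonneg fsum_nonneg)
  show "(\<Sum>n. cT ev n * t^n) \<le> vfun t / (1 + vfun t)"
    using A t unfolding v_def[symmetric] Es_def[symmetric] by (intro summable_PS(2)) (auto simp: tsum_nonneg fsum_nonneg)
qed



theorem mainTheorem6:
  fixes z :: real
  assumes "0 < \<bar>z\<bar>" and "\<bar>z\<bar> < 1/3"
  shows "(\<lambda>n. real (retakh_leaf_total n) * z ^ n) sums
           (let v = vfun z in
              v * (1 + v) * (1 - v + 2 * v^2 - v^3) / ((1 - v) * (1 + v + v^2)))"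
proof -
  define t where "t = \<bar>z\<bar>"
  have t: "0 < t" "t < 1/3" using assms by (auto simp: t_def)
  define t' where "t' = (t + 1/3) / 2"
  have t': "0 < t'" "t' < 1/3" "t < t'" using t by (auto simp: t'_def)
  note cs = counts_summable[OF t]
  note cs' = counts_summable[OF t'(1,2)]
  note nn = tsum_nonneg fsum_nonneg
  have lsum: "summable (\<lambda>n. lT P n * t^n)" if "summable (\<lambda>n. cT P n * t'^n)" for P
    by (rule summable_n[where a="cT P" and t'=t']) (use that t t' lT_le in \<open>auto simp: tsum_nonneg\<close>)
  have lfsum: "summable (\<lambda>n. lF Q n * t^n)" if "summable (\<lambda>n. cF Q n * t'^n)" for Q
    by (rule summable_n[where a="cF Q" and t'=t']) (use that t t' lF_le in \<open>auto simp: fsum_nonneg\<close>)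
  have s_cev: "summable (\<lambda>n. cT ev n * \<bar>z\<bar>^n)" using cs(1) by (simp add: t_def)
  have s_cod: "summable (\<lambda>n. cT od n * \<bar>z\<bar>^n)" using cs(2) by (simp add: t_def)
  have s_fod: "summable (\<lambda>n. cF od n * \<bar>z\<bar>^n)" using cs(3) by (simp add: t_def)
  have s_fev: "summable (\<lambda>n. cF ev n * \<bar>z\<bar>^n)" using cs(4) by (simp add: t_def)
  have s_ccc: "summable (\<lambda>n. cT cc n * \<bar>z\<bar>^n)" using cs(5) by (simp add: t_def)
  have s_fcc: "summable (\<lambda>n. cF cc n * \<bar>z\<bar>^n)" using cs(6) by (simp add: t_def)
  have s_lev: "summable (\<lambda>n. lT ev n * \<bar>z\<bar>^n)" using lsum[OF cs'(1)] by (simp add: t_def)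
  have s_lod: "summable (\<lambda>n. lT od n * \<bar>z\<bar>^n)" using lsum[OF cs'(2)] by (simp add: t_def)
  have s_lfod: "summable (\<lambda>n. lF od n * \<bar>z\<bar>^n)" using lfsum[OF cs'(3)] by (simp add: t_def)
  have s_lfev: "summable (\<lambda>n. lF ev n * \<bar>z\<bar>^n)" using lfsum[OF cs'(4)] by (simp add: t_def)
  have s_lcc: "summable (\<lambda>n. lT cc n * \<bar>z\<bar>^n)" using lsum[OF cs'(5)] by (simp add: t_def)
  have s_lfcc: "summable (\<lambda>n. lF cc n * \<bar>z\<bar>^n)" using lfsum[OF cs'(6)] by (simp add: t_def)
  define E where "E = (\<Sum>n. cT ev n * z^n)"
  define Od where "Od = (\<Sum>n. cT od n * z^n)"
  define FO where "FO = (\<Sum>n. cF od n * z^n)"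
  define FE where "FE = (\<Sum>n. cF ev n * z^n)"
  define C where "C = (\<Sum>n. cT cc n * z^n)"
  define FC where "FC = (\<Sum>n. cF cc n * z^n)"
  define LE where "LE = (\<Sum>n. lT ev n * z^n)"
  define LO where "LO = (\<Sum>n. lT od n * z^n)"
  define LFO where "LFO = (\<Sum>n. lF od n * z^n)"
  define LFE where "LFE = (\<Sum>n. lF ev n * z^n)"
  define LC where "LC = (\<Sum>n. lT cc n * z^n)"
  define LFC where "LFC = (\<Sum>n. lF cc n * z^n)"
  have sE: "(\<lambda>n. cT ev n * z^n) sums E" unfolding E_def by (rule sums_self[OF tsum_nonneg s_cev])
  have sO: "(\<lambda>n. cT od n * z^n) sums Od" unfolding Od_def by (rule sums_self[OF tsum_nonneg s_cod])
  have sFO: "(\<lambda>n. cF od n * z^n) sums FO" unfolding FO_def by (rule sums_self[OF fsum_nonneg s_fod])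
  have sFE: "(\<lambda>n. cF ev n * z^n) sums FE" unfolding FE_def by (rule sums_self[OF fsum_nonneg s_fev])
  have sC: "(\<lambda>n. cT cc n * z^n) sums C" unfolding C_def by (rule sums_self[OF tsum_nonneg s_ccc])
  have sFC: "(\<lambda>n. cF cc n * z^n) sums FC" unfolding FC_def by (rule sums_self[OF fsum_nonneg s_fcc])
  have sLE: "(\<lambda>n. lT ev n * z^n) sums LE" unfolding LE_def by (rule sums_self[OF tsum_nonneg s_lev])
  have sLO: "(\<lambda>n. lT od n * z^n) sums LO" unfolding LO_def by (rule sums_self[OF tsum_nonneg s_lod])
  have sLFO: "(\<lambda>n. lF od n * z^n) sums LFO" unfolding LFO_def by (rule sums_self[OF fsum_nonneg s_lfod])
  have sLFE: "(\<lambda>n. lF ev n * z^n) sums LFE" unfolding LFE_def by (rule sums_self[OF fsum_nonneg s_lfev])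
  have sLC: "(\<lambda>n. lT cc n * z^n) sums LC" unfolding LC_def by (rule sums_self[OF tsum_nonneg s_lcc])
  have sLFC: "(\<lambda>n. lF cc n * z^n) sums LFC" unfolding LFC_def by (rule sums_self[OF fsum_nonneg s_lfcc])

  have "(\<lambda>n. cT ev n * z^n) sums (z * FO)"
    by (rule shift_sums) (use sFO in \<open>simp_all add: rec_facts(1,3)\<close>)
  then have eq1: "E = z * FO" using sE sums_unique2 by blast
  have "(\<lambda>n. cT od n * z^n) sums (z * (FE - 1))"
  proof (rule shift_sums)
    show "(\<lambda>n. cT od (Suc n) * z^n) sums (FE - 1)"
      using sums_diff[OF sFE dl_sums[of z]] by (simp add: rec_facts(4) left_diff_distrib)
  qed (simp add: rec_facts(1))
  then have eq2: "Od = z * (FE - 1)" using sO sums_unique2 by blast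
  have "(\<lambda>n. cT cc n * z^n) sums (z * FE)"
    by (rule shift_sums) (use sFE in \<open>simp_all add: rec_facts(1,5)\<close>)
  then have eq5: "C = z * FE" using sC sums_unique2 by blast
  have eqF: "(\<lambda>n. cF Q n * z^n) sums (1 + T * F)"
    if "(\<lambda>n. cT Q n * z^n) sums T" "T = (\<Sum>n. cT Q n * z^n)" "F = (\<Sum>n. cF Q n * z^n)"
       "summable (\<lambda>n. cT Q n * \<bar>z\<bar>^n)" "summable (\<lambda>n. cF Q n * \<bar>z\<bar>^n)" for Q T F
  proof -
    have "(\<lambda>n. dl n * z^n + conv (cT Q) (cF Q) n * z^n) sums (1 + T * F)"
      unfolding that(2,3) by (rule sums_add[OF dl_sums conv_sums]) (use that nn in auto)
    moreover have "(\<lambda>n. cF Q n * z^n) = (\<lambda>n. dl n * z^n + conv (cT Q) (cF Q) n * z^n)"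
      by (rule ext, subst rec_facts(10)) (simp add: distrib_right)
    ultimately show ?thesis by simp
  qed
  have eq3: "FO = 1 + Od * FO" using eqF[OF sO Od_def FO_def s_cod s_fod] sFO sums_unique2 by blast
  have eq4: "FE = 1 + E * FE" using eqF[OF sE E_def FE_def s_cev s_fev] sFE sums_unique2 by blast
  have eq6: "FC = 1 + C * FC" using eqF[OF sC C_def FC_def s_ccc s_fcc] sFC sums_unique2 by blast
  have eqL: "(\<lambda>n. lF Q n * z^n) sums (LT * F + T * LF)"
    if "T = (\<Sum>n. cT Q n * z^n)" "F = (\<Sum>n. cF Q n * z^n)"
       "LT = (\<Sum>n. lT Q n * z^n)" "LF = (\<Sum>n. lF Q n * z^n)"
       "summable (\<lambda>n. cT Q n * \<bar>z\<bar>^n)" "summable (\<lambda>n. cF Q n * \<bar>z\<bar>^n)"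
       "summable (\<lambda>n. lT Q n * \<bar>z\<bar>^n)" "summable (\<lambda>n. lF Q n * \<bar>z\<bar>^n)" for Q T F LT LF
  proof -
    have "(\<lambda>n. conv (lT Q) (cF Q) n * z^n + conv (cT Q) (lF Q) n * z^n) sums (LT * F + T * LF)"
      unfolding that(1-4) by (rule sums_add[OF conv_sums conv_sums]) (use that nn in auto)
    moreover have "(\<lambda>n. lF Q n * z^n) = (\<lambda>n. conv (lT Q) (cF Q) n * z^n + conv (cT Q) (lF Q) n * z^n)"
      by (rule ext, subst rec_facts(11)) (simp add: distrib_right)
    ultimately show ?thesis by simp
  qed
  have eq11: "LFO = LO * FO + Od * LFO"
    using eqL[OF Od_def FO_def LO_def LFO_def s_cod s_fod s_lod s_lfod] sLFO sums_unique2 by blast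
  have eq12: "LFE = LE * FE + E * LFE"
    using eqL[OF E_def FE_def LE_def LFE_def s_cev s_fev s_lev s_lfev] sLFE sums_unique2 by blast
  have eq13: "LFC = LC * FC + C * LFC"
    using eqL[OF C_def FC_def LC_def LFC_def s_ccc s_fcc s_lcc s_lfcc] sLFC sums_unique2 by blast
  have "(\<lambda>n. lT ev n * z^n) sums (z * (LFO + 1))"
    by (rule shift_sums) (use sums_add[OF sLFO dl_sums[of z]] in \<open>simp_all add: rec_facts(2,6) distrib_right\<close>)
  then have eq7: "LE = z * (LFO + 1)" using sLE sums_unique2 by blast
  have "(\<lambda>n. lT od n * z^n) sums (z * LFE)"
    by (rule shift_sums) (use sLFE in \<open>simp_all add: rec_facts(2,7)\<close>)
  then have eq8: "LO = z * LFE" using sLO sums_unique2 by blast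
  have "(\<lambda>n. lT cc n * z^n) sums (z * (LFE + 1))"
    by (rule shift_sums) (use sums_add[OF sLFE dl_sums[of z]] in \<open>simp_all add: rec_facts(2,8) distrib_right\<close>)
  then have eq9: "LC = z * (LFE + 1)" using sLC sums_unique2 by blast
  have sLR: "(\<lambda>n. lT retakh n * z^n) sums (z * (LFC + 1))"
    by (rule shift_sums) (use sums_add[OF sLFC dl_sums[of z]] in \<open>simp_all add: rec_facts(2,9) distrib_right\<close>)

  have "\<bar>E\<bar> \<le> (\<Sum>n. norm (cT ev n * z^n))"
    unfolding E_def using summable_norm[OF abs_summ[OF tsum_nonneg s_cev]] by simp
  also have "\<dots> = (\<Sum>n. cT ev n * t^n)" by (simp add: t_def abs_mult power_abs tsum_nonneg)
  also have "\<dots> \<le> vfun t / (1 + vfun t)" by (rule cs(7))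
  also have "\<dots> < 1/2"
  proof -
    have "\<bar>vfun t\<bar> < 1" "vfun t > 0" using vfun_props[of t] t by auto
    then show ?thesis by (simp add: field_simps)
  qed
  finally have Eb: "\<bar>E\<bar> < 1/2" .

  define v where "v = vfun z"
  have vq: "v = z * (1 + v + v^2)" "\<bar>v\<bar> < 1" using vfun_props[OF assms] unfolding v_def by auto
  have zq: "z * (1 + v + v^2) = v" by (rule sym[OF vq(1)])
  have quad: "(1 + z) * E^2 - (1 + z) * E + z = 0"
    using eq1 eq2 eq3 eq4 by algebra
  have "((1 + v) * E - v) * ((1 + v) * E - 1) = 0"
    using quad zq by algebra
  moreover have "(1 + v) * E \<noteq> 1"
  proof
    assume h: "(1 + v) * E = 1"
    have "\<bar>(1 + v) * E\<bar> = \<bar>1 + v\<bar> * \<bar>E\<bar>" by (simp add: abs_mult)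
    also have "\<dots> < 2 * (1/2)"
      using vq(2) Eb by (intro mult_strict_mono') auto
    finally show False using h by simp
  qed
  ultimately have Ev: "(1 + v) * E = v" by simp
  have FEv: "FE = 1 + v" using eq4 Ev by algebra
  have FO1: "FO * (1 - z * v) = 1" using eq3 eq2 FEv by algebra
  have FC1: "FC * (1 - z * (1 + v)) = 1" using eq6 eq5 FEv by algebra
  have LFEv: "LFE = LE * (1 + v)^2" using eq12 Ev FEv by algebra
  have LEv: "LE * (1 - v^2) = z" using eq7 eq11 eq8 LFEv eq1 Ev FO1 eq2 FEv by algebra
  have LRv: "z * (LFC + 1) = z * (z * (LFE + 1) * FC^2 + 1)" using eq13 eq9 FC1 eq5 FEv by algebra
  have fin: "z * (LFC + 1) = v * (1 + v) * (1 - v + 2 * v^2 - v^3) / ((1 - v) * (1 + v + v^2))"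
    by (rule final_alg[OF vq(1) vq(2) LEv LFEv FC1 LRv])
  show ?thesis using sLR unfolding fin v_def Let_def by (simp add: total_eq)
qed


end
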